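(* Let $\Gamma=(W,F,\succ_W,\succ_F)$ be a matching market and let $T=(V,E,W)$ be a technology tree in which every worker $w\in W$ is a specialist. If the firms have unit-demand preferences over $T$, then the firms' demand type $\mathcal{D}=\bigcup_{f\in F}\mathcal{D}_f$ is totally unimodular.
   Context: A matching market: finite firms $F$, finite workers $W$, each firm $f\in F$ has a strict, complete, transitive preference $\succ_f$ over $2^W$, and workers have preferences over firms (irrelevant here). The choice function $Ch_f(S)$ is the $\succ_f$-best subset of $S$. For $S\subseteq W$, $ind(S)\in\{0,1\}^W$ is its indicator vector. The demand type of $f$ is $\mathcal{D}_f=\{\mathbf d\in\{-1,0,1\}^W:\mathbf d\neq \mathbf 0,\ \mathbf d=ind(Ch_f(S))-ind(Ch_f(S'))\text{ for some }S'\subsetneq S\subseteq W\}$; $\mathcal D=\bigcup_{f\in F}\mathcal D_f$. A set of vectors is totally unimodular if the matrix with these vectors as columns has every square submatrix of determinant $0$ or $\pm1$. A technology tree $T=(V,E,W)$ is a directed rooted tree $(V,E)$ with root $v_0$, all edges pointing away from the root, together with a set $W^v\subseteq W$ for each vertex $v$, such that $W^{v_0}=\emptyset$ and for each edge $e$ from $v$ to $v'$, $W^v\subsetneq W^{v'}$; put $W^e=W^{v'}\setminus W^v$. A worker $w$ is a specialist in $T$ if $|\{e\in E: w\in W^e\}|=1$. Firms have unit-demand preferences over $T$ if for every $f\in F$ and $S\subseteq W$, $S\succ_f\emptyset$ implies $S=W^v$ for some $v\in V$. *)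

theory Defs
  imports Main "Jordan_Normal_Form.Determinant"
begin

(* Strict preference of firm f: (S, T) \<in> P means S \<succ>_f T.
   It must be a strict, complete, transitive order on Pow W. *)
definition strict_pref :: "'w set \<Rightarrow> ('w set \<times> 'w set) set \<Rightarrow> bool" where
  "strict_pref W P \<longleftrightarrow> P \<subseteq> Pow W \<times> Pow W \<and>
     (\<forall>S. (S, S) \<notin> P) \<and> trans P \<and>
     (\<forall>S\<in>Pow W. \<forall>T\<in>Pow W. S \<noteq> T \<longrightarrow> (S, T) \<in> P \<or> (T, S) \<in> P)"

definition Ch :: "('w set \<times> 'w set) set \<Rightarrow> 'w set \<Rightarrow> 'w set" where
  "Ch P S = (THE T. T \<subseteq> S \<and> (\<forall>T'. T' \<subseteq> S \<longrightarrow> T' \<noteq> T \<longrightarrow> (T, T') \<in> P))"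

definition ind :: "'w set \<Rightarrow> 'w \<Rightarrow> int" where
  "ind S = (\<lambda>w. if w \<in> S then 1 else 0)"

definition demand_type :: "'w set \<Rightarrow> ('w set \<times> 'w set) set \<Rightarrow> ('w \<Rightarrow> int) set" where
  "demand_type W P = {d. (\<forall>w. d w \<in> {-1, 0, 1}) \<and> d \<noteq> (\<lambda>_. 0) \<and>
      (\<exists>S S'. S' \<subset> S \<and> S \<subseteq> W \<and> d = (\<lambda>w. ind (Ch P S) w - ind (Ch P S') w))}"

definition totally_unimodular :: "'w set \<Rightarrow> ('w \<Rightarrow> int) set \<Rightarrow> bool" where
  "totally_unimodular W D \<longleftrightarrow>
     (\<forall>rs cs. distinct rs \<and> set rs \<subseteq> W \<and> distinct cs \<and> set cs \<subseteq> D \<and> length rs = length cs \<longrightarrow>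
        det (mat (length rs) (length cs) (\<lambda>(i, j). (cs ! j) (rs ! i))) \<in> {-1, 0, 1})"

definition technology_tree ::
  "'w set \<Rightarrow> 'v set \<Rightarrow> ('v \<times> 'v) set \<Rightarrow> 'v \<Rightarrow> ('v \<Rightarrow> 'w set) \<Rightarrow> bool" where
  "technology_tree W V E v0 Wv \<longleftrightarrow>
     finite V \<and> v0 \<in> V \<and> E \<subseteq> V \<times> V \<and>
     (\<forall>v\<in>V. (v0, v) \<in> E\<^sup>*) \<and>
     (\<forall>u. (u, v0) \<notin> E) \<and>
     (\<forall>v\<in>V. v \<noteq> v0 \<longrightarrow> (\<exists>!u. (u, v) \<in> E)) \<and>
     (\<forall>v\<in>V. Wv v \<subseteq> W) \<and> Wv v0 = {} \<and>
     (\<forall>(v, v')\<in>E. Wv v \<subset> Wv v')"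

definition edge_workers :: "('v \<Rightarrow> 'w set) \<Rightarrow> 'v \<times> 'v \<Rightarrow> 'w set" where
  "edge_workers Wv e = Wv (snd e) - Wv (fst e)"

definition specialist :: "('v \<times> 'v) set \<Rightarrow> ('v \<Rightarrow> 'w set) \<Rightarrow> 'w \<Rightarrow> bool" where
  "specialist E Wv w \<longleftrightarrow> card {e\<in>E. w \<in> edge_workers Wv e} = 1"

definition unit_demand :: "'f set \<Rightarrow> 'w set \<Rightarrow> ('f \<Rightarrow> ('w set \<times> 'w set) set) \<Rightarrow> 'v set \<Rightarrow> ('v \<Rightarrow> 'w set) \<Rightarrow> bool" where
  "unit_demand F W P V Wv \<longleftrightarrow>
     (\<forall>f\<in>F. \<forall>S. S \<subseteq> W \<longrightarrow> (S, {}) \<in> P f \<longrightarrow> (\<exists>v\<in>V. S = Wv v))"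

end

theory Submission
  imports Defs
begin


definition Mx :: "(nat \<Rightarrow> 'x set) \<Rightarrow> (nat \<Rightarrow> 'x \<times> 'x) \<Rightarrow> nat \<Rightarrow> int mat" where
  "Mx B p n = mat n n (\<lambda>(i,j). ind (B i) (fst (p j)) - ind (B i) (snd (p j)))"

lemma Mx_carrier: "Mx B p n \<in> carrier_mat n n"
  unfolding Mx_def by auto

lemma Mx_dim[simp]: "dim_row (Mx B p n) = n" "dim_col (Mx B p n) = n"
  unfolding Mx_def by auto

lemma Mx_index: "i < n \<Longrightarrow> j < n \<Longrightarrow> Mx B p n $$ (i,j) = ind (B i) (fst (p j)) - ind (B i) (snd (p j))"
  unfolding Mx_def by auto

lemma same_ind:
  assumes lam: "\<forall>i<n. B i \<inter> B e = {} \<or> B e \<subseteq> B i" and x: "x \<in> B e" and y: "y \<in> B e" and i: "i < n"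
  shows "ind (B i) x = ind (B i) y"
proof -
  from lam i have "B i \<inter> B e = {} \<or> B e \<subseteq> B i" by blast
  then show ?thesis using x y unfolding ind_def by auto
qed

lemma colop:
  assumes e: "e < n" and j0: "j0 < n" and j: "j < n" and jj0: "j \<noteq> j0"
    and lam: "\<forall>i<n. B i \<inter> B e = {} \<or> B e \<subseteq> B i"
    and h0: "(fst (p j0) \<in> B e) \<noteq> (snd (p j0) \<in> B e)"
    and h: "(fst (p j) \<in> B e) \<noteq> (snd (p j) \<in> B e)"
  shows "\<exists>q. det (Mx B (p(j := q)) n) = det (Mx B p n) \<and> (fst q \<in> B e \<longleftrightarrow> snd q \<in> B e)"
proof -
  obtain u0 v0 where p0: "p j0 = (u0, v0)" by (cases "p j0")
  obtain u v where pj: "p j = (u, v)" by (cases "p j")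
  have key: "\<And>a q. (\<And>i. i < n \<Longrightarrow> ind (B i) (fst q) - ind (B i) (snd q) =
        a * (ind (B i) u0 - ind (B i) v0) + (ind (B i) u - ind (B i) v)) \<Longrightarrow>
        det (Mx B (p(j := q)) n) = det (Mx B p n)"
  proof -
    fix a q
    assume H: "\<And>i. i < n \<Longrightarrow> ind (B i) (fst q) - ind (B i) (snd q) =
        a * (ind (B i) u0 - ind (B i) v0) + (ind (B i) u - ind (B i) v)"
    have "addcol a j j0 (Mx B p n) = Mx B (p(j := q)) n"
    proof (rule eq_matI)
      fix i k assume i: "i < dim_row (Mx B (p(j := q)) n)" and k: "k < dim_col (Mx B (p(j := q)) n)"
      then have i': "i < n" and k': "k < n" using Mx_carrier[of B "p(j := q)" n] by auto
      show "addcol a j j0 (Mx B p n) $$ (i, k) = Mx B (p(j := q)) n $$ (i, k)"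
      proof (cases "k = j")
        case True
        then show ?thesis using i' k' j0 H[OF i'] p0 pj jj0 Mx_carrier[of B p n]
          by (simp add: Mx_index)
      next
        case False
        then show ?thesis using i' k' j0 Mx_carrier[of B p n]
          by (simp add: Mx_index)
      qed
    qed (simp_all add: Mx_def)
    then show "det (Mx B (p(j := q)) n) = det (Mx B p n)"
      using det_addcol[OF j0 jj0 Mx_carrier] by metis
  qed
  show ?thesis
  proof (cases "u0 \<in> B e")
    case u0: True
    then have v0: "v0 \<notin> B e" using h0 p0 by auto
    show ?thesis
    proof (cases "u \<in> B e")
      case True
      then have "v \<notin> B e" using h pj by auto
      have "det (Mx B (p(j := (v0, v))) n) = det (Mx B p n)"
        by (rule key[where a="-1"]) (simp add: same_ind[OF lam u0 True])
      then show ?thesis using v0 \<open>v \<notin> B e\<close> by (intro exI[of _ "(v0, v)"]) auto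
    next
      case False
      then have v: "v \<in> B e" using h pj by auto
      have "det (Mx B (p(j := (u, v0))) n) = det (Mx B p n)"
        by (rule key[where a="1"]) (simp add: same_ind[OF lam u0 v])
      then show ?thesis using v0 False by (intro exI[of _ "(u, v0)"]) auto
    qed
  next
    case u0: False
    then have v0: "v0 \<in> B e" using h0 p0 by auto
    show ?thesis
    proof (cases "u \<in> B e")
      case True
      then have "v \<notin> B e" using h pj by auto
      have "det (Mx B (p(j := (u0, v))) n) = det (Mx B p n)"
        by (rule key[where a="1"]) (simp add: same_ind[OF lam v0 True])
      then show ?thesis using u0 \<open>v \<notin> B e\<close> by (intro exI[of _ "(u0, v)"]) auto
    next
      case False
      then have v: "v \<in> B e" using h pj by auto
      have "det (Mx B (p(j := (u, u0))) n) = det (Mx B p n)"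
        by (rule key[where a="-1"]) (simp add: same_ind[OF lam v0 v])
      then show ?thesis using u0 False by (intro exI[of _ "(u, u0)"]) auto
    qed
  qed
qed


lemma clear:
  assumes fin: "finite J" and J: "J \<subseteq> {..<n} - {j0}" and e: "e < n" and j0: "j0 < n"
    and lam: "\<forall>i<n. B i \<inter> B e = {} \<or> B e \<subseteq> B i"
    and h0: "(fst (p j0) \<in> B e) \<noteq> (snd (p j0) \<in> B e)"
  shows "\<exists>p'. det (Mx B p' n) = det (Mx B p n) \<and> (\<forall>j\<in>J. (fst (p' j) \<in> B e) = (snd (p' j) \<in> B e))
           \<and> (\<forall>j. j \<notin> J \<longrightarrow> p' j = p j)"
  using fin J
proof (induction J rule: finite_induct)
  case empty
  then show ?case by auto
next
  case (insert j J)
  then obtain p' where p': "det (Mx B p' n) = det (Mx B p n)"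
    "\<forall>j\<in>J. (fst (p' j) \<in> B e) = (snd (p' j) \<in> B e)" "\<forall>j. j \<notin> J \<longrightarrow> p' j = p j" by auto
  have j: "j < n" "j \<noteq> j0" using insert by auto
  have j0J: "j0 \<notin> J" using insert by auto
  show ?case
  proof (cases "(fst (p' j) \<in> B e) = (snd (p' j) \<in> B e)")
    case True
    then show ?thesis using p' by (intro exI[of _ p']) auto
  next
    case False
    have h0': "(fst (p' j0) \<in> B e) \<noteq> (snd (p' j0) \<in> B e)" using h0 p'(3) j0J by simp
    from colop[OF e j0 j(1) j(2) lam h0' False] obtain q where
      q: "det (Mx B (p'(j := q)) n) = det (Mx B p' n)" "(fst q \<in> B e) = (snd q \<in> B e)" by blast
    show ?thesis
    proof (rule exI[of _ "p'(j := q)"], intro conjI)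
      show "det (Mx B (p'(j := q)) n) = det (Mx B p n)" using q(1) p'(1) by simp
      show "\<forall>ja\<in>insert j J. (fst ((p'(j := q)) ja) \<in> B e) = (snd ((p'(j := q)) ja) \<in> B e)"
        using q(2) p'(2) by auto
      show "\<forall>ja. ja \<notin> insert j J \<longrightarrow> (p'(j := q)) ja = p ja" using p'(3) by auto
    qed
  qed
qed

lemma minus_one_pow_cases: "(-1::int)^k = 1 \<or> (-1::int)^k = -1"
  by (cases "even k") auto

lemma main:
  "\<forall>B p. (\<forall>i<n. finite (B i)) \<longrightarrow> (\<forall>i<n. \<forall>k<n. B i \<inter> B k = {} \<or> B i \<subseteq> B k \<or> B k \<subseteq> B i)
     \<longrightarrow> det (Mx B p n) \<in> {-1, 0, 1}"
proof (induction n)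
  case 0
  then show ?case using Mx_carrier det_dim_zero by auto
next
  case (Suc n)
  show ?case
  proof (intro allI impI)
    fix B :: "nat \<Rightarrow> 'a set" and p :: "nat \<Rightarrow> 'a \<times> 'a"
    assume fin: "\<forall>i<Suc n. finite (B i)"
      and lam0: "\<forall>i<Suc n. \<forall>k<Suc n. B i \<inter> B k = {} \<or> B i \<subseteq> B k \<or> B k \<subseteq> B i"
    define e where "e = arg_min (\<lambda>i. card (B i)) (\<lambda>i. i < Suc n)"
    have e: "e < Suc n" and emin: "\<forall>i. i < Suc n \<longrightarrow> card (B e) \<le> card (B i)"
      using arg_min_nat_lemma[of "\<lambda>i. i < Suc n" 0 "\<lambda>i. card (B i)"] unfolding e_def by auto
    have lam: "\<forall>i<Suc n. B i \<inter> B e = {} \<or> B e \<subseteq> B i"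
    proof (intro allI impI)
      fix i assume i: "i < Suc n"
      have "B i \<inter> B e = {} \<or> B i \<subseteq> B e \<or> B e \<subseteq> B i" using lam0 i e by blast
      moreover have "B i \<subseteq> B e \<Longrightarrow> B e \<subseteq> B i"
        using card_subset_eq[of "B e" "B i"] fin e emin i
        by (metis card_mono order.antisym order_refl)
      ultimately show "B i \<inter> B e = {} \<or> B e \<subseteq> B i" by blast
    qed
    let ?A = "Mx B p (Suc n)"
    show "det ?A \<in> {-1, 0, 1}"
    proof (cases "\<forall>j<Suc n. (fst (p j) \<in> B e) = (snd (p j) \<in> B e)")
      case True
      have "det ?A = (\<Sum>j<Suc n. ?A $$ (e,j) * cofactor ?A e j)"
        by (rule laplace_expansion_row[OF Mx_carrier e])
      also have "\<dots> = 0"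
        by (rule sum.neutral, insert True e, auto simp: Mx_index ind_def)
      finally show ?thesis by simp
    next
      case False
      then obtain j0 where j0: "j0 < Suc n" and h0: "(fst (p j0) \<in> B e) \<noteq> (snd (p j0) \<in> B e)" by auto
      obtain p' where p': "det (Mx B p' (Suc n)) = det ?A"
        "\<forall>j\<in>{..<Suc n} - {j0}. (fst (p' j) \<in> B e) = (snd (p' j) \<in> B e)"
        "\<forall>j. j \<notin> {..<Suc n} - {j0} \<longrightarrow> p' j = p j"
        using clear[of "{..<Suc n} - {j0}" "Suc n" j0 e B p, OF _ _ e j0 lam h0] by auto
      let ?A' = "Mx B p' (Suc n)"
      have h0': "(fst (p' j0) \<in> B e) \<noteq> (snd (p' j0) \<in> B e)" using h0 p'(3) by simp
      have "det ?A' = (\<Sum>j<Suc n. ?A' $$ (e,j) * cofactor ?A' e j)"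
        by (rule laplace_expansion_row[OF Mx_carrier e])
      also have "\<dots> = ?A' $$ (e,j0) * cofactor ?A' e j0 + (\<Sum>j\<in>{..<Suc n} - {j0}. ?A' $$ (e,j) * cofactor ?A' e j)"
        by (rule sum.remove, insert j0, auto)
      also have "(\<Sum>j\<in>{..<Suc n} - {j0}. ?A' $$ (e,j) * cofactor ?A' e j) = 0"
        by (rule sum.neutral, insert p'(2) e, auto simp: Mx_index ind_def)
      finally have d: "det ?A' = ?A' $$ (e,j0) * cofactor ?A' e j0" by simp
      have ent: "?A' $$ (e,j0) = 1 \<or> ?A' $$ (e,j0) = -1"
        using h0' e j0 by (auto simp: Mx_index ind_def)
      define B' where "B' = (\<lambda>i. B (insert_index e i))"
      define q where "q = (\<lambda>j. p' (insert_index j0 j))"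
      have ii: "\<And>i k. i < n \<Longrightarrow> k < Suc n \<Longrightarrow> insert_index k i < Suc n"
        unfolding insert_index_def by auto
      have del: "mat_delete ?A' e j0 = Mx B' q n"
      proof (rule eq_matI)
        fix i k assume "i < dim_row (Mx B' q n)" "k < dim_col (Mx B' q n)"
        then have i: "i < n" and k: "k < n" by auto
        show "mat_delete ?A' e j0 $$ (i, k) = Mx B' q n $$ (i, k)"
          using i k ii[OF i e] ii[OF k j0]
          by (simp add: mat_delete_def Mx_index B'_def q_def insert_index_def)
      qed (simp_all add: mat_delete_def)
      have "det (Mx B' q n) \<in> {-1, 0, 1}"
        using Suc.IH[rule_format, of B' q] fin lam0 ii e unfolding B'_def by auto
      then have "cofactor ?A' e j0 \<in> {-1, 0, 1}"
        unfolding cofactor_def del using minus_one_pow_cases[of "e + j0"] by auto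
      then show ?thesis using d ent p'(1) by auto
    qed
  qed
qed



lemma max_exists:
  assumes "finite A" "A \<noteq> {}"
    and irr: "\<forall>S. (S, S) \<notin> P" and tr: "trans P"
    and tot: "\<forall>S\<in>A. \<forall>T\<in>A. S \<noteq> T \<longrightarrow> (S, T) \<in> P \<or> (T, S) \<in> P"
  shows "\<exists>m\<in>A. \<forall>x\<in>A. x \<noteq> m \<longrightarrow> (m, x) \<in> P"
  using assms(1,2) tot
proof (induction A rule: finite_ne_induct)
  case (singleton x)
  then show ?case by auto
next
  case (insert x A)
  then obtain m where m: "m \<in> A" "\<forall>y\<in>A. y \<noteq> m \<longrightarrow> (m, y) \<in> P" by auto
  have xm: "x \<noteq> m" using m insert by auto
  show ?case
  proof (cases "(x, m) \<in> P")
    case True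
    have "\<forall>y\<in>insert x A. y \<noteq> x \<longrightarrow> (x, y) \<in> P"
    proof (intro ballI impI)
      fix y assume "y \<in> insert x A" "y \<noteq> x"
      then have y: "y \<in> A" by auto
      show "(x, y) \<in> P"
      proof (cases "y = m")
        case True then show ?thesis using \<open>(x, m) \<in> P\<close> by simp
      next
        case False then show ?thesis using m y True tr by (meson transD)
      qed
    qed
    then show ?thesis by blast
  next
    case False
    then have "(m, x) \<in> P" using insert.prems m xm by blast
    then show ?thesis using m by blast
  qed
qed

lemma Ch_spec:
  assumes sp: "strict_pref W P" and S: "S \<subseteq> W" and finW: "finite W"
  shows "Ch P S \<subseteq> S \<and> (\<forall>T'. T' \<subseteq> S \<longrightarrow> T' \<noteq> Ch P S \<longrightarrow> (Ch P S, T') \<in> P)"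
proof -
  have irr: "\<forall>S. (S, S) \<notin> P" and tr: "trans P"
    and tot: "\<forall>S\<in>Pow W. \<forall>T\<in>Pow W. S \<noteq> T \<longrightarrow> (S, T) \<in> P \<or> (T, S) \<in> P"
    using sp unfolding strict_pref_def by auto
  have fin: "finite (Pow S)" using finite_subset[OF S finW] by simp
  have tot': "\<forall>X\<in>Pow S. \<forall>T\<in>Pow S. X \<noteq> T \<longrightarrow> (X, T) \<in> P \<or> (T, X) \<in> P"
    using tot S by blast
  obtain m where m: "m \<in> Pow S" "\<forall>x\<in>Pow S. x \<noteq> m \<longrightarrow> (m, x) \<in> P"
    using max_exists[OF fin _ irr tr tot'] by blast
  have ex: "\<exists>!T. T \<subseteq> S \<and> (\<forall>T'. T' \<subseteq> S \<longrightarrow> T' \<noteq> T \<longrightarrow> (T, T') \<in> P)"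
  proof
    show "m \<subseteq> S \<and> (\<forall>T'. T' \<subseteq> S \<longrightarrow> T' \<noteq> m \<longrightarrow> (m, T') \<in> P)" using m by auto
  next
    fix T assume T: "T \<subseteq> S \<and> (\<forall>T'. T' \<subseteq> S \<longrightarrow> T' \<noteq> T \<longrightarrow> (T, T') \<in> P)"
    show "T = m"
    proof (rule ccontr)
      assume "T \<noteq> m"
      then have "(T, m) \<in> P" "(m, T) \<in> P" using T m by auto
      then show False using tr irr by (meson transD)
    qed
  qed
  show ?thesis unfolding Ch_def by (rule theI'[OF ex])
qed

lemma Ch_node:
  assumes sp: "strict_pref W (P f)" and S: "S \<subseteq> W" and finW: "finite W"
    and tt: "technology_tree W V E v0 Wv" and ud: "unit_demand F W P V Wv" and f: "f \<in> F"
  shows "\<exists>u\<in>V. Ch (P f) S = Wv u"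
proof -
  have C: "Ch (P f) S \<subseteq> S" "\<forall>T'. T' \<subseteq> S \<longrightarrow> T' \<noteq> Ch (P f) S \<longrightarrow> (Ch (P f) S, T') \<in> P f"
    using Ch_spec[OF sp S finW] by auto
  show ?thesis
  proof (cases "Ch (P f) S = {}")
    case True
    then show ?thesis using tt unfolding technology_tree_def by auto
  next
    case False
    then have "(Ch (P f) S, {}) \<in> P f" using C by auto
    then show ?thesis using ud f C S unfolding unit_demand_def by (metis order_trans)
  qed
qed

context
  fixes W :: "'w set" and V :: "'v set" and E and v0 and Wv
  assumes tt: "technology_tree W V E v0 Wv"
begin

lemma tt_E: "E \<subseteq> V \<times> V" and tt_reach: "\<forall>v\<in>V. (v0, v) \<in> E\<^sup>*"
  and tt_root: "\<forall>u. (u, v0) \<notin> E" and tt_par: "\<forall>v\<in>V. v \<noteq> v0 \<longrightarrow> (\<exists>!u. (u, v) \<in> E)"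
  and tt_W0: "Wv v0 = {}" and tt_mono1: "\<forall>(v, v')\<in>E. Wv v \<subset> Wv v'"
  and tt_WV: "\<forall>v\<in>V. Wv v \<subseteq> W"
  using tt unfolding technology_tree_def by auto

lemma tt_mono: "(a, b) \<in> E\<^sup>* \<Longrightarrow> Wv a \<subseteq> Wv b"
proof (induction rule: rtrancl_induct)
  case base then show ?case by simp
next
  case (step y z)
  then show ?case using tt_mono1 by blast
qed

lemma tt_entry: "(v0, x) \<in> E\<^sup>* \<Longrightarrow> w \<in> Wv x \<Longrightarrow>
   \<exists>a b. (a, b) \<in> E \<and> w \<in> edge_workers Wv (a, b) \<and> (b, x) \<in> E\<^sup>*"
proof (induction rule: rtrancl_induct)
  case base then show ?case using tt_W0 by simp
next
  case (step y z)
  show ?case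
  proof (cases "w \<in> Wv y")
    case True
    then obtain a b where "(a, b) \<in> E" "w \<in> edge_workers Wv (a, b)" "(b, y) \<in> E\<^sup>*"
      using step by blast
    then show ?thesis using step(2) by (meson rtrancl.rtrancl_into_rtrancl)
  next
    case False
    then show ?thesis using step unfolding edge_workers_def by auto
  qed
qed

lemma tt_chain: "(b, x) \<in> E\<^sup>* \<Longrightarrow> (b', x) \<in> E\<^sup>* \<Longrightarrow> (b, b') \<in> E\<^sup>* \<or> (b', b) \<in> E\<^sup>*"
proof (induction arbitrary: b' rule: rtrancl_induct)
  case base then show ?case by simp
next
  case (step y z)
  from step.prems show ?case
  proof (cases rule: rtranclE)
    case base
    then show ?thesis using step(1,2) by (meson rtrancl.rtrancl_into_rtrancl)
  next
    case (step y')
    have zV: "z \<in> V" using tt_E \<open>(y, z) \<in> E\<close> by auto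
    have zr: "z \<noteq> v0" using tt_root \<open>(y, z) \<in> E\<close> by auto
    have "y' = y" using tt_par zV zr \<open>(y, z) \<in> E\<close> \<open>(y', z) \<in> E\<close> by blast
    then show ?thesis using step.IH \<open>(b', y') \<in> E\<^sup>*\<close> by blast
  qed
qed

lemma tt_worker:
  assumes spec: "specialist E Wv w"
  shows "\<exists>b. \<forall>x\<in>V. w \<in> Wv x \<longleftrightarrow> (b, x) \<in> E\<^sup>*"
proof -
  obtain e where e: "{e\<in>E. w \<in> edge_workers Wv e} = {e}"
    using spec unfolding specialist_def by (meson card_1_singletonE)
  obtain a b where ab: "e = (a, b)" by (cases e)
  have eE: "(a, b) \<in> E" "w \<in> edge_workers Wv (a, b)" using e ab by auto
  have "\<forall>x\<in>V. w \<in> Wv x \<longleftrightarrow> (b, x) \<in> E\<^sup>*"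
  proof (intro ballI iffI)
    fix x assume x: "x \<in> V" "w \<in> Wv x"
    then obtain a' b' where "(a', b') \<in> E" "w \<in> edge_workers Wv (a', b')" "(b', x) \<in> E\<^sup>*"
      using tt_entry tt_reach by blast
    moreover then have "(a', b') = e" using e by blast
    ultimately show "(b, x) \<in> E\<^sup>*" using ab by simp
  next
    fix x assume "(b, x) \<in> E\<^sup>*"
    then have "Wv b \<subseteq> Wv x" by (rule tt_mono)
    moreover have "w \<in> Wv b" using eE(2) unfolding edge_workers_def by simp
    ultimately show "w \<in> Wv x" by blast
  qed
  then show ?thesis by blast
qed

lemma tt_laminar:
  assumes "specialist E Wv w" "specialist E Wv w'"
  shows "{x\<in>V. w \<in> Wv x} \<inter> {x\<in>V. w' \<in> Wv x} = {} \<or> {x\<in>V. w \<in> Wv x} \<subseteq> {x\<in>V. w' \<in> Wv x}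
     \<or> {x\<in>V. w' \<in> Wv x} \<subseteq> {x\<in>V. w \<in> Wv x}"
proof -
  obtain b where b: "\<forall>x\<in>V. w \<in> Wv x \<longleftrightarrow> (b, x) \<in> E\<^sup>*" using tt_worker assms(1) by blast
  obtain b' where b': "\<forall>x\<in>V. w' \<in> Wv x \<longleftrightarrow> (b', x) \<in> E\<^sup>*" using tt_worker assms(2) by blast
  show ?thesis
  proof (cases "{x\<in>V. w \<in> Wv x} \<inter> {x\<in>V. w' \<in> Wv x} = {}")
    case False
    then obtain x where "x \<in> V" "(b, x) \<in> E\<^sup>*" "(b', x) \<in> E\<^sup>*" using b b' by blast
    then have "(b, b') \<in> E\<^sup>* \<or> (b', b) \<in> E\<^sup>*" using tt_chain by blast
    then show ?thesis
    proof
      assume bb: "(b, b') \<in> E\<^sup>*"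
      have "{x\<in>V. w' \<in> Wv x} \<subseteq> {x\<in>V. w \<in> Wv x}"
      proof (intro subsetI)
        fix x assume "x \<in> {x\<in>V. w' \<in> Wv x}"
        then have x: "x \<in> V" "(b', x) \<in> E\<^sup>*" using b' by auto
        then have "(b, x) \<in> E\<^sup>*" using rtrancl_trans[OF bb] by blast
        then show "x \<in> {x\<in>V. w \<in> Wv x}" using b x by auto
      qed
      then show ?thesis by blast
    next
      assume bb: "(b', b) \<in> E\<^sup>*"
      have "{x\<in>V. w \<in> Wv x} \<subseteq> {x\<in>V. w' \<in> Wv x}"
      proof (intro subsetI)
        fix x assume "x \<in> {x\<in>V. w \<in> Wv x}"
        then have x: "x \<in> V" "(b, x) \<in> E\<^sup>*" using b by auto
        then have "(b', x) \<in> E\<^sup>*" using rtrancl_trans[OF bb] by blast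
        then show "x \<in> {x\<in>V. w' \<in> Wv x}" using b' x by auto
      qed
      then show ?thesis by blast
    qed
  qed simp
qed

end


theorem theorem2:
  fixes F :: "'f set" and W :: "'w set"
    and P :: "'f \<Rightarrow> ('w set \<times> 'w set) set"
    and V :: "'v set" and E :: "('v \<times> 'v) set" and v0 :: 'v and Wv :: "'v \<Rightarrow> 'w set"
  assumes "finite F" and "finite W"
    and "\<forall>f\<in>F. strict_pref W (P f)"
    and "technology_tree W V E v0 Wv"
    and "\<forall>w\<in>W. specialist E Wv w"
    and "unit_demand F W P V Wv"
  shows "totally_unimodular W (\<Union>f\<in>F. demand_type W (P f))"
  unfolding totally_unimodular_def
proof (intro allI impI)
  fix rs :: "'w list" and cs :: "('w \<Rightarrow> int) list"
  assume H: "distinct rs \<and> set rs \<subseteq> W \<and> distinct cs \<and> set cs \<subseteq> (\<Union>f\<in>F. demand_type W (P f)) \<and> length rs = length cs"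
  define k where "k = length rs"
  have lc: "length cs = k" using H k_def by simp
  have finV: "finite V" using assms(4) unfolding technology_tree_def by simp
  have col: "\<forall>j\<in>{..<k}. \<exists>uv. fst uv \<in> V \<and> snd uv \<in> V \<and>
      cs ! j = (\<lambda>w. ind (Wv (fst uv)) w - ind (Wv (snd uv)) w)"
  proof
    fix j assume "j \<in> {..<k}"
    then have "cs ! j \<in> set cs" using lc by simp
    then obtain f where f: "f \<in> F" and d: "cs ! j \<in> demand_type W (P f)" using H by blast
    then obtain S S' where SS: "S' \<subset> S" "S \<subseteq> W" and
      dj: "cs ! j = (\<lambda>w. ind (Ch (P f) S) w - ind (Ch (P f) S') w)"
      unfolding demand_type_def by blast
    have sp: "strict_pref W (P f)" using assms(3) f by blast
    obtain u where u: "u \<in> V" "Ch (P f) S = Wv u"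
      using Ch_node[OF sp SS(2) assms(2) assms(4) assms(6) f] by blast
    obtain v where v: "v \<in> V" "Ch (P f) S' = Wv v"
      using Ch_node[OF sp _ assms(2) assms(4) assms(6) f, of S'] SS by blast
    show "\<exists>uv. fst uv \<in> V \<and> snd uv \<in> V \<and>
      cs ! j = (\<lambda>w. ind (Wv (fst uv)) w - ind (Wv (snd uv)) w)"
      using u v dj by (intro exI[of _ "(u, v)"]) simp
  qed
  then obtain p where p: "\<forall>j\<in>{..<k}. fst (p j) \<in> V \<and> snd (p j) \<in> V \<and>
      cs ! j = (\<lambda>w. ind (Wv (fst (p j))) w - ind (Wv (snd (p j))) w)"
    by (metis (no_types, lifting) bchoice)
  define B where "B = (\<lambda>i. {x\<in>V. rs ! i \<in> Wv x})"
  have eq: "mat (length rs) (length cs) (\<lambda>(i, j). (cs ! j) (rs ! i)) = Mx B p k"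
  proof (rule eq_matI)
    fix i j assume "i < dim_row (Mx B p k)" "j < dim_col (Mx B p k)"
    then have i: "i < k" and j: "j < k" by auto
    have pj: "fst (p j) \<in> V" "snd (p j) \<in> V"
      "cs ! j = (\<lambda>w. ind (Wv (fst (p j))) w - ind (Wv (snd (p j))) w)" using p j by auto
    show "mat (length rs) (length cs) (\<lambda>(i, j). (cs ! j) (rs ! i)) $$ (i, j) = Mx B p k $$ (i, j)"
      using i j lc pj unfolding k_def by (simp add: Mx_index B_def ind_def)
  qed (simp_all add: k_def lc)
  have wW: "\<And>i. i < k \<Longrightarrow> specialist E Wv (rs ! i)"
    using H assms(5) unfolding k_def by (meson nth_mem subsetD)
  have fB: "\<forall>i<k. finite (B i)" using finV unfolding B_def by simp
  have lB: "\<forall>i<k. \<forall>ka<k. B i \<inter> B ka = {} \<or> B i \<subseteq> B ka \<or> B ka \<subseteq> B i"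
    unfolding B_def using tt_laminar[OF assms(4)] wW by blast
  have "det (Mx B p k) \<in> {-1, 0, 1}" using main fB lB by blast
  then show "det (mat (length rs) (length cs) (\<lambda>(i, j). (cs ! j) (rs ! i))) \<in> {-1, 0, 1}"
    using eq by simp
qed

end
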